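(* Let $X$ be a space with $|X|<\mathfrak{d}$. (a) If $X$ is absolutely strongly star-Lindelöf, then $X$ is selectively strongly star-Menger. (b) If $X$ is absolutely Star-$\sigma$-cd, then $X$ is strongly selectively $(a)$.
   Context: All spaces are regular. $St(A,\mathcal{U})=\bigcup\{U\in\mathcal{U}:U\cap A\neq\emptyset\}$. $\mathfrak{d}$ is the dominating number. $X$ is absolutely strongly star-Lindelöf if for every open cover $\mathcal{U}$ and every dense $D\subseteq X$ there is a countable $C\subseteq D$ with $St(C,\mathcal{U})=X$. $X$ is selectively strongly star-Menger if for every sequence $(\mathcal{U}_n:n\in\omega)$ of open covers and every sequence $(D_n:n\in\omega)$ of dense subsets there are finite $F_n\subseteq D_n$ with $\{St(F_n,\mathcal{U}_n):n\in\omega\}$ covering $X$. $X$ is absolutely Star-$\sigma$-cd if for every dense $D\subseteq X$ and every open cover $\mathcal{U}$ there is $K\subseteq D$ which is a countable union of closed discrete subsets of $X$ with $St(K,\mathcal{U})=X$. $X$ is strongly selectively $(a)$ if for every sequence $(\mathcal{U}_n)$ of open covers and every sequence $(D_n)$ of dense subsets there are sets $C_n\subseteq D_n$, each closed and discrete in $X$, with $\{St(C_n,\mathcal{U}_n):n\in\omega\}$ covering $X$. *)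

theory Defs
  imports "HOL-Analysis.Analysis"
begin

definition St :: "'a set \<Rightarrow> 'a set set \<Rightarrow> 'a set" where
  "St A \<U> = \<Union>{U \<in> \<U>. U \<inter> A \<noteq> {}}"

definition open_cover :: "'a topology \<Rightarrow> 'a set set \<Rightarrow> bool" where
  "open_cover X \<U> \<longleftrightarrow> (\<forall>U\<in>\<U>. openin X U) \<and> \<Union>\<U> = topspace X"

definition dense_in :: "'a topology \<Rightarrow> 'a set \<Rightarrow> bool" where
  "dense_in X D \<longleftrightarrow> D \<subseteq> topspace X \<and> X closure_of D = topspace X"

definition closed_discrete :: "'a topology \<Rightarrow> 'a set \<Rightarrow> bool" where
  "closed_discrete X C \<longleftrightarrow> closedin X C \<and> subtopology X C = discrete_topology C"

definition regular_T1 :: "'a topology \<Rightarrow> bool" where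
  "regular_T1 X \<longleftrightarrow> regular_space X \<and> t1_space X"

definition dominating :: "(nat \<Rightarrow> nat) set \<Rightarrow> bool" where
  "dominating F \<longleftrightarrow> (\<forall>g. \<exists>f\<in>F. \<forall>\<^sub>F n in sequentially. g n \<le> f n)"

text \<open>\<open>|S| < \<dd>\<close>: the cardinality of S is strictly below the cardinality of every
  dominating family (i.e. below their minimum, the dominating number).\<close>
definition card_less_d :: "'a set \<Rightarrow> bool" where
  "card_less_d S \<longleftrightarrow> (\<forall>F. dominating F \<longrightarrow> (card_of S, card_of F) \<in> ordLess)"

definition absolutely_strongly_star_Lindelof :: "'a topology \<Rightarrow> bool" where
  "absolutely_strongly_star_Lindelof X \<longleftrightarrow>
     (\<forall>\<U> D. open_cover X \<U> \<longrightarrow> dense_in X D \<longrightarrow>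
        (\<exists>C. C \<subseteq> D \<and> countable C \<and> St C \<U> = topspace X))"

definition selectively_strongly_star_Menger :: "'a topology \<Rightarrow> bool" where
  "selectively_strongly_star_Menger X \<longleftrightarrow>
     (\<forall>\<U> D. (\<forall>n::nat. open_cover X (\<U> n)) \<longrightarrow> (\<forall>n. dense_in X (D n)) \<longrightarrow>
        (\<exists>F. (\<forall>n. finite (F n) \<and> F n \<subseteq> D n) \<and> (\<Union>n. St (F n) (\<U> n)) = topspace X))"

definition absolutely_star_sigma_cd :: "'a topology \<Rightarrow> bool" where
  "absolutely_star_sigma_cd X \<longleftrightarrow>
     (\<forall>\<U> D. open_cover X \<U> \<longrightarrow> dense_in X D \<longrightarrow>
        (\<exists>K. K \<subseteq> D \<and> (\<exists>C::nat \<Rightarrow> 'a set. (\<forall>n. closed_discrete X (C n)) \<and> K = (\<Union>n. C n))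
             \<and> St K \<U> = topspace X))"

definition strongly_selectively_a :: "'a topology \<Rightarrow> bool" where
  "strongly_selectively_a X \<longleftrightarrow>
     (\<forall>\<U> D. (\<forall>n::nat. open_cover X (\<U> n)) \<longrightarrow> (\<forall>n. dense_in X (D n)) \<longrightarrow>
        (\<exists>C. (\<forall>n. C n \<subseteq> D n \<and> closed_discrete X (C n)) \<and> (\<Union>n. St (C n) (\<U> n)) = topspace X))"

end

theory Submission
  imports Defs
begin

lemma St_mono: "A \<subseteq> B \<Longrightarrow> St A \<U> \<subseteq> St B \<U>"
  unfolding St_def by blast

lemma St_sub: "open_cover X \<U> \<Longrightarrow> St A \<U> \<subseteq> topspace X"
  unfolding St_def open_cover_def by blast

lemma key:
  fixes X :: "'a topology" and P :: "nat \<Rightarrow> nat \<Rightarrow> 'a set"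
  assumes cd: "card_less_d (topspace X)"
    and oc: "\<And>n. open_cover X (\<U> n)"
    and st: "\<And>n. St (\<Union>m. P n m) (\<U> n) = topspace X"
  shows "\<exists>g. (\<Union>n. St (\<Union>m\<in>{..g n}. P n m) (\<U> n)) = topspace X"
proof -
  have ex: "\<exists>k. x \<in> St (\<Union>m\<in>{..k}. P n m) (\<U> n)" if "x \<in> topspace X" for x n
  proof -
    have "x \<in> St (\<Union>m. P n m) (\<U> n)" using that st[of n] by simp
    then obtain U where U: "U \<in> \<U> n" "x \<in> U" "U \<inter> (\<Union>m. P n m) \<noteq> {}"
      unfolding St_def by blast
    then obtain y m where y: "y \<in> U" "y \<in> P n m" by blast
    have "U \<in> {V \<in> \<U> n. V \<inter> (\<Union>m\<in>{..m}. P n m) \<noteq> {}}" using U(1) y by blast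
    hence "x \<in> St (\<Union>m\<in>{..m}. P n m) (\<U> n)" unfolding St_def using U(2) by (rule UnionI)
    thus ?thesis by (rule exI)
  qed
  define f where "f x n = (LEAST k. x \<in> St (\<Union>m\<in>{..k}. P n m) (\<U> n))" for x n
  have fin: "x \<in> St (\<Union>m\<in>{..f x n}. P n m) (\<U> n)" if "x \<in> topspace X" for x n
    unfolding f_def using ex[OF that] by (rule LeastI_ex)
  have "\<not> dominating (f ` topspace X)"
  proof
    assume "dominating (f ` topspace X)"
    then have lt: "(card_of (topspace X), card_of (f ` topspace X)) \<in> ordLess"
      using cd unfolding card_less_d_def by (elim allE impE)
    have "\<not> (card_of (f ` topspace X), card_of (topspace X)) \<in> ordLeq" by (rule not_ordLess_ordLeq[OF lt])
    moreover have "(card_of (f ` topspace X), card_of (topspace X)) \<in> ordLeq" by (rule card_of_image)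
    ultimately show False by (rule notE)
  qed
  then obtain g where g: "\<And>h. h \<in> f ` topspace X \<Longrightarrow> \<not> (\<forall>\<^sub>F n in sequentially. g n \<le> h n)"
    unfolding dominating_def by blast
  have "(\<Union>n. St (\<Union>m\<in>{..g n}. P n m) (\<U> n)) = topspace X"
  proof
    show "(\<Union>n. St (\<Union>m\<in>{..g n}. P n m) (\<U> n)) \<subseteq> topspace X"
      by (rule UN_least) (rule St_sub[OF oc])
  next
    show "topspace X \<subseteq> (\<Union>n. St (\<Union>m\<in>{..g n}. P n m) (\<U> n))"
    proof
      fix x assume x: "x \<in> topspace X"
      have "\<exists>n. f x n < g n"
      proof (rule ccontr)
        assume "\<not> ?thesis"
        hence "\<forall>n. g n \<le> f x n" by (simp add: not_less)
        hence "\<forall>\<^sub>F n in sequentially. g n \<le> f x n" by (rule always_eventually)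
        moreover have "f x \<in> f ` topspace X" using x by (rule imageI)
        ultimately show False using g by blast
      qed
      then obtain n where n: "f x n < g n" by blast
      have "St (\<Union>m\<in>{..f x n}. P n m) (\<U> n) \<subseteq> St (\<Union>m\<in>{..g n}. P n m) (\<U> n)"
        by (rule St_mono, rule UN_mono) (use n in auto)
      with fin[OF x, of n] show "x \<in> (\<Union>n. St (\<Union>m\<in>{..g n}. P n m) (\<U> n))" by blast
    qed
  qed
  thus ?thesis by blast
qed

lemma closed_discrete_empty: "closed_discrete X {}"
  unfolding closed_discrete_def by (simp add: subtopology_eq_discrete_topology_eq)

lemma closed_discrete_Un:
  assumes "closed_discrete X A" "closed_discrete X B"
  shows "closed_discrete X (A \<union> B)"
proof -
  have a: "closedin X A" "A \<subseteq> topspace X" "A \<inter> X derived_set_of A = {}"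
    and b: "closedin X B" "B \<subseteq> topspace X" "B \<inter> X derived_set_of B = {}"
    using assms unfolding closed_discrete_def subtopology_eq_discrete_topology_eq by auto
  have "X derived_set_of A \<subseteq> A" "X derived_set_of B \<subseteq> B"
    using a(1) b(1) by (simp_all add: closedin_contains_derived_set)
  hence "(A \<union> B) \<inter> X derived_set_of (A \<union> B) = {}"
    using a b by (auto simp: derived_set_of_Un)
  thus ?thesis using a b unfolding closed_discrete_def subtopology_eq_discrete_topology_eq by auto
qed

lemma closed_discrete_UN_atMost:
  assumes "\<And>m. closed_discrete X (C m)"
  shows "closed_discrete X (\<Union>m\<in>{..k::nat}. C m)"
proof (induction k)
  case 0 thus ?case using assms by simp
next
  case (Suc k)
  have "(\<Union>m\<in>{..Suc k}. C m) = (\<Union>m\<in>{..k}. C m) \<union> C (Suc k)"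
    by (auto simp: atMost_Suc)
  thus ?case using Suc closed_discrete_Un assms by metis
qed

theorem mainTheorem4:
  fixes X :: "'a topology"
  assumes "regular_T1 X"
    and "card_less_d (topspace X)"
  shows "(absolutely_strongly_star_Lindelof X \<longrightarrow> selectively_strongly_star_Menger X)
       \<and> (absolutely_star_sigma_cd X \<longrightarrow> strongly_selectively_a X)"
proof (intro conjI impI)
  assume A: "absolutely_strongly_star_Lindelof X"
  show "selectively_strongly_star_Menger X"
    unfolding selectively_strongly_star_Menger_def
  proof (intro allI impI)
    fix \<U> :: "nat \<Rightarrow> 'a set set" and D :: "nat \<Rightarrow> 'a set"
    assume oc: "\<forall>n. open_cover X (\<U> n)" and dd: "\<forall>n. dense_in X (D n)"
    have oc': "\<And>n. open_cover X (\<U> n)" using oc by blast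
    show "\<exists>F. (\<forall>n. finite (F n) \<and> F n \<subseteq> D n) \<and> (\<Union>n. St (F n) (\<U> n)) = topspace X"
    proof (cases "topspace X = {}")
      case True
      show ?thesis
        by (rule exI[of _ "\<lambda>n::nat. {}"]) (simp add: True St_def)
    next
      case ne: False
      have "\<exists>C. C \<subseteq> D n \<and> countable C \<and> St C (\<U> n) = topspace X" for n :: nat
      proof -
        have "open_cover X (\<U> n)" "dense_in X (D n)" using oc dd by auto
        from A[unfolded absolutely_strongly_star_Lindelof_def, rule_format, OF this]
        show ?thesis .
      qed
      then have ex: "\<forall>n. \<exists>C. C \<subseteq> D n \<and> countable C \<and> St C (\<U> n) = topspace X" by blast
      from choice[OF ex] obtain C where C0: "\<forall>n. C n \<subseteq> D n \<and> countable (C n) \<and> St (C n) (\<U> n) = topspace X"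
        by blast
      have C: "\<And>n. C n \<subseteq> D n" "\<And>n. countable (C n)" "\<And>n. St (C n) (\<U> n) = topspace X"
        using C0 by auto
      have Cne: "C n \<noteq> {}" for n
      proof
        assume "C n = {}"
        then have "St (C n) (\<U> n) = {}" by (simp add: St_def)
        with C(3)[of n] ne show False by simp
      qed
      have eq: "(\<Union>m. {from_nat_into (C n) m}) = C n" for n
      proof
        show "(\<Union>m. {from_nat_into (C n) m}) \<subseteq> C n" using from_nat_into[OF Cne] by blast
        show "C n \<subseteq> (\<Union>m. {from_nat_into (C n) m})"
        proof
          fix a assume "a \<in> C n"
          then obtain m where "from_nat_into (C n) m = a" using from_nat_into_surj[OF C(2)] by blast
          thus "a \<in> (\<Union>m. {from_nat_into (C n) m})" by blast
        qed
      qed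
      have st: "\<And>n. St (\<Union>m. {from_nat_into (C n) m}) (\<U> n) = topspace X"
        unfolding eq by (rule C(3))
      obtain g where g: "(\<Union>n. St (\<Union>m\<in>{..g n}. {from_nat_into (C n) m}) (\<U> n)) = topspace X"
        using key[of X \<U> "\<lambda>n m. {from_nat_into (C n) m}", OF assms(2) oc' st] by blast
      show ?thesis
      proof (rule exI[of _ "\<lambda>n::nat. \<Union>m\<in>{..g n}. {from_nat_into (C n) m}"], intro conjI allI)
        fix n
        show "finite (\<Union>m\<in>{..g n}. {from_nat_into (C n) m})" by simp
        show "(\<Union>m\<in>{..g n}. {from_nat_into (C n) m}) \<subseteq> D n"
          using from_nat_into[OF Cne] C(1) by blast
      qed (rule g)
    qed
  qed
next
  assume A: "absolutely_star_sigma_cd X"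
  show "strongly_selectively_a X"
    unfolding strongly_selectively_a_def
  proof (intro allI impI)
    fix \<U> :: "nat \<Rightarrow> 'a set set" and D :: "nat \<Rightarrow> 'a set"
    assume oc: "\<forall>n. open_cover X (\<U> n)" and dd: "\<forall>n. dense_in X (D n)"
    have oc': "\<And>n. open_cover X (\<U> n)" using oc by blast
    have "\<exists>C::nat \<Rightarrow> 'a set. (\<Union>m. C m) \<subseteq> D n \<and> (\<forall>m. closed_discrete X (C m))
              \<and> St (\<Union>m. C m) (\<U> n) = topspace X" for n :: nat
    proof -
      have "open_cover X (\<U> n)" "dense_in X (D n)" using oc dd by auto
      from A[unfolded absolutely_star_sigma_cd_def, rule_format, OF this]
      obtain K where K: "K \<subseteq> D n" "\<exists>C::nat \<Rightarrow> 'a set. (\<forall>m. closed_discrete X (C m)) \<and> K = (\<Union>m. C m)"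
        "St K (\<U> n) = topspace X" by blast
      from K(2) obtain C :: "nat \<Rightarrow> 'a set" where C1: "\<forall>m. closed_discrete X (C m)" and C2: "K = (\<Union>m. C m)"
        by blast
      have "(\<Union>m. C m) \<subseteq> D n" "St (\<Union>m. C m) (\<U> n) = topspace X"
        using K(1,3) unfolding C2 by simp_all
      with C1 show ?thesis by blast
    qed
    then have ex: "\<forall>n. \<exists>C::nat \<Rightarrow> 'a set. (\<Union>m. C m) \<subseteq> D n \<and> (\<forall>m. closed_discrete X (C m))
              \<and> St (\<Union>m. C m) (\<U> n) = topspace X" by blast
    from choice[OF ex] obtain C :: "nat \<Rightarrow> nat \<Rightarrow> 'a set" where C0: "\<forall>n. (\<Union>m. C n m) \<subseteq> D n \<and> (\<forall>m. closed_discrete X (C n m))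
              \<and> St (\<Union>m. C n m) (\<U> n) = topspace X"
      by blast
    have C: "\<And>n. (\<Union>m. C n m) \<subseteq> D n"
      "\<And>n m. closed_discrete X (C n m)" "\<And>n. St (\<Union>m. C n m) (\<U> n) = topspace X"
      using C0 by auto
    obtain g where g: "(\<Union>n. St (\<Union>m\<in>{..g n}. C n m) (\<U> n)) = topspace X"
      using key[of X \<U> C, OF assms(2) oc' C(3)] by blast
    show "\<exists>C. (\<forall>n. C n \<subseteq> D n \<and> closed_discrete X (C n)) \<and> (\<Union>n. St (C n) (\<U> n)) = topspace X"
    proof (rule exI[of _ "\<lambda>n::nat. \<Union>m\<in>{..g n}. C n m"], intro conjI allI)
      fix n
      show "(\<Union>m\<in>{..g n}. C n m) \<subseteq> D n" using C(1)[of n] by blast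
      show "closed_discrete X (\<Union>m\<in>{..g n}. C n m)"
        by (rule closed_discrete_UN_atMost) (rule C(2))
    qed (rule g)
  qed
qed

end
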